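(* For all $\theta_1,\theta_2\in\mathbb{R}$, the mixed-power-affine bilinear form $g^{A,\theta_1,\theta_2}$ on $\mathrm{SPD}_n$ is symmetric and positive definite at every point, hence a Riemannian metric on $\mathrm{SPD}_n$; moreover $g^{A,\theta_1,\theta_2}=g^{A,\theta_2,\theta_1}$.
   Context: For $\theta\in\mathbb{R}$ define $\varphi_\theta:\mathrm{SPD}_n\to\mathrm{Sym}_n$ by $\varphi_\theta=\frac1\theta\mathrm{pow}_\theta$ if $\theta\neq0$ and $\varphi_0=\log$, where $\mathrm{pow}_\theta=\exp\circ(\theta\log)$ is the matrix power and $\log$ the symmetric matrix logarithm; $\partial_X\varphi_\theta(\Sigma)$ is the differential at $\Sigma$ applied to $X\in\mathrm{Sym}_n\cong T_\Sigma\mathrm{SPD}_n$. With $\theta=(\theta_1+\theta_2)/2$, the mixed-power-affine bilinear form is $g^{A,\theta_1,\theta_2}_\Sigma(X,Y)=\mathrm{tr}\big(\Sigma^{-\theta}\,\partial_X\varphi_{\theta_1}(\Sigma)\,\Sigma^{-\theta}\,\partial_Y\varphi_{\theta_2}(\Sigma)\big)$. *)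

theory Defs
  imports "HOL-Analysis.Analysis"
begin

text \<open>Symmetric matrices (Sym_n, identified with the tangent spaces of SPD_n).\<close>
definition sym_mat :: "real^'n^'n \<Rightarrow> bool" where
  "sym_mat A \<longleftrightarrow> transpose A = A"

definition spd :: "real^'n^'n \<Rightarrow> bool" where
  "spd A \<longleftrightarrow> sym_mat A \<and> (\<forall>x::real^'n. x \<noteq> 0 \<longrightarrow> x \<bullet> (A *v x) > 0)"

definition diag_mat :: "real^'n \<Rightarrow> real^'n^'n" where
  "diag_mat d = (\<chi> i j. if i = j then d $ i else 0)"

definition mat_fun :: "(real \<Rightarrow> real) \<Rightarrow> real^'n^'n \<Rightarrow> real^'n^'n" where
  "mat_fun f A = (THE M. \<exists>U d. orthogonal_matrix U \<and> A = U ** diag_mat d ** transpose U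
       \<and> M = U ** diag_mat (\<chi> i. f (d $ i)) ** transpose U)"

definition mat_log :: "real^'n^'n \<Rightarrow> real^'n^'n" where
  "mat_log A = mat_fun ln A"

definition mat_exp :: "real^'n^'n \<Rightarrow> real^'n^'n" where
  "mat_exp A = mat_fun exp A"

definition mat_pow :: "real \<Rightarrow> real^'n^'n \<Rightarrow> real^'n^'n" where
  "mat_pow \<theta> A = mat_exp (\<theta> *\<^sub>R mat_log A)"

definition phi :: "real \<Rightarrow> real^'n^'n \<Rightarrow> real^'n^'n" where
  "phi \<theta> A = (if \<theta> = 0 then mat_log A else (1 / \<theta>) *\<^sub>R mat_pow \<theta> A)"

definition dphi :: "real \<Rightarrow> real^'n^'n \<Rightarrow> real^'n^'n \<Rightarrow> real^'n^'n" where
  "dphi \<theta> S X = vector_derivative (\<lambda>t. phi \<theta> (S + t *\<^sub>R X)) (at 0)"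

definition mpa_form :: "real \<Rightarrow> real \<Rightarrow> real^'n^'n \<Rightarrow> real^'n^'n \<Rightarrow> real^'n^'n \<Rightarrow> real" where
  "mpa_form \<theta>1 \<theta>2 S X Y =
     (let \<theta> = (\<theta>1 + \<theta>2) / 2 in
      trace (mat_pow (- \<theta>) S ** dphi \<theta>1 S X ** mat_pow (- \<theta>) S ** dphi \<theta>2 S Y))"

end

theory Submission
  imports Defs
begin


lemma taylor_bound:
  fixes f g h :: "real \<Rightarrow> real"
  assumes d1: "\<And>x. x \<in> {m..M} \<Longrightarrow> (f has_real_derivative g x) (at x)"
    and d2: "\<And>x. x \<in> {m..M} \<Longrightarrow> (g has_real_derivative h x) (at x)"
    and bd: "\<And>x. x \<in> {m..M} \<Longrightarrow> \<bar>h x\<bar> \<le> K"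
    and a: "a \<in> {m..M}" and y: "y \<in> {m..M}"
  shows "\<bar>f y - f a - g a * (y - a)\<bar> \<le> K * (y - a)^2"
proof (cases y a rule: linorder_cases)
  case less
  obtain z where z: "y < z" "z < a" "f a - f y = (a - y) * g z"
    using MVT2[OF less, of f g] d1 a y by auto
  obtain \<zeta> where ze: "z < \<zeta>" "\<zeta> < a" "g a - g z = (a - z) * h \<zeta>"
    using MVT2[OF z(2), of g h] d2 a y z by auto
  have "\<bar>h \<zeta>\<bar> \<le> K" using bd a y z ze by auto
  moreover have "(a - z) \<le> (a - y)" "a - z \<ge> 0" using z by auto
  ultimately have "\<bar>g a - g z\<bar> \<le> K * (a - y)"
    unfolding ze(3) abs_mult by (metis abs_ge_zero abs_of_nonneg mult.commute mult_mono order_trans)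
  moreover have "f y - f a - g a * (y - a) = (a - y) * (g a - g z)" using z by (simp add: algebra_simps)
  ultimately have "\<bar>f y - f a - g a * (y - a)\<bar> \<le> (a - y) * (K * (a - y))"
    using less by (simp add: abs_mult mult_left_mono)
  then show ?thesis by (simp add: power2_eq_square algebra_simps)
next
  case equal then show ?thesis by simp
next
  case greater
  obtain z where z: "a < z" "z < y" "f y - f a = (y - a) * g z"
    using MVT2[OF greater, of f g] d1 a y by auto
  obtain \<zeta> where ze: "a < \<zeta>" "\<zeta> < z" "g z - g a = (z - a) * h \<zeta>"
    using MVT2[OF z(1), of g h] d2 a y z by auto
  have "\<bar>h \<zeta>\<bar> \<le> K" using bd a y z ze by auto
  moreover have "(z - a) \<le> (y - a)" "z - a \<ge> 0" using z by auto
  ultimately have "\<bar>g z - g a\<bar> \<le> K * (y - a)"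
    unfolding ze(3) abs_mult by (metis abs_ge_zero abs_of_nonneg mult.commute mult_mono order_trans)
  moreover have "f y - f a - g a * (y - a) = (y - a) * (g z - g a)" using z by (simp add: algebra_simps)
  ultimately have "\<bar>f y - f a - g a * (y - a)\<bar> \<le> (y - a) * (K * (y - a))"
    using greater by (simp add: abs_mult mult_left_mono)
  then show ?thesis by (simp add: power2_eq_square algebra_simps)
qed

definition pf :: "real \<Rightarrow> real \<Rightarrow> real" where
  "pf \<theta> x = (if \<theta> = 0 then ln x else exp (\<theta> * ln x) / \<theta>)"

definition pf1 :: "real \<Rightarrow> real \<Rightarrow> real" where
  "pf1 \<theta> x = exp ((\<theta> - 1) * ln x)"

lemma dexpln:
  assumes "x > 0"
  shows "((\<lambda>x. exp (c * ln x)) has_real_derivative c * exp ((c - 1) * ln x)) (at x)"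
proof -
  have "((\<lambda>x. exp (c * ln x)) has_real_derivative exp (c * ln x) * (c * (1 / x))) (at x)"
    using assms by (auto intro!: derivative_eq_intros)
  moreover have "exp (c * ln x) * (c * (1 / x)) = c * exp ((c - 1) * ln x)"
    using assms by (simp add: algebra_simps exp_diff)
  ultimately show ?thesis by simp
qed

lemma pf_deriv:
  assumes "x > 0"
  shows "(pf \<theta> has_real_derivative pf1 \<theta> x) (at x)"
proof (cases "\<theta> = 0")
  case True
  have "(ln has_real_derivative 1 / x) (at x)" using assms by (auto intro!: derivative_eq_intros)
  moreover have "1 / x = pf1 \<theta> x" using True assms by (simp add: pf1_def exp_minus inverse_eq_divide)
  ultimately show ?thesis using True by (simp add: pf_def[abs_def])
next
  case False
  have "((\<lambda>x. exp (\<theta> * ln x) / \<theta>) has_real_derivative \<theta> * exp ((\<theta> - 1) * ln x) / \<theta>) (at x)"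
    using dexpln[OF assms, of \<theta>] by (rule DERIV_cdivide)
  then show ?thesis using False by (simp add: pf_def[abs_def] pf1_def)
qed

lemma pf1_deriv:
  assumes "x > 0"
  shows "(pf1 \<theta> has_real_derivative (\<theta> - 1) * exp ((\<theta> - 2) * ln x)) (at x)"
  using dexpln[OF assms, of "\<theta> - 1"] by (simp add: pf1_def[abs_def] algebra_simps)

lemma pf_taylor:
  assumes m: "m > 0"
  shows "\<exists>K. \<forall>a y. a \<in> {m..M} \<longrightarrow> y \<in> {m..M} \<longrightarrow>
     \<bar>pf \<theta> y - pf \<theta> a - pf1 \<theta> a * (y - a)\<bar> \<le> K * (y - a)^2"
proof -
  define K where "K = \<bar>\<theta> - 1\<bar> * (exp ((\<theta> - 2) * ln m) + exp ((\<theta> - 2) * ln M))"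
  have bd: "\<bar>(\<theta> - 1) * exp ((\<theta> - 2) * ln x)\<bar> \<le> K" if x: "x \<in> {m..M}" for x
  proof -
    have lx: "ln m \<le> ln x" "ln x \<le> ln M" using x m by auto
    have "(\<theta> - 2) * ln x \<le> (\<theta> - 2) * ln m \<or> (\<theta> - 2) * ln x \<le> (\<theta> - 2) * ln M"
    proof (cases "\<theta> - 2 \<ge> 0")
      case True then show ?thesis using lx mult_left_mono by blast
    next
      case False then show ?thesis using lx by (simp add: mult_left_mono_neg)
    qed
    then have "exp ((\<theta> - 2) * ln x) \<le> exp ((\<theta> - 2) * ln m) + exp ((\<theta> - 2) * ln M)"
      by (smt (verit) exp_gt_zero exp_le_cancel_iff)
    then show ?thesis unfolding K_def abs_mult by (simp add: mult_left_mono)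
  qed
  show ?thesis
    by (rule exI[of _ K], intro allI impI, rule taylor_bound[where h="\<lambda>x. (\<theta> - 1) * exp ((\<theta> - 2) * ln x)"])
      (use m bd pf_deriv pf1_deriv in auto)
qed

lemma pf_mono_dd:
  assumes "x > 0" "y > 0" "x \<noteq> y"
  shows "(pf \<theta> x - pf \<theta> y) / (x - y) > 0"
proof (cases "x < y")
  case True
  obtain z where "x < z" "z < y" "pf \<theta> y - pf \<theta> x = (y - x) * pf1 \<theta> z"
    using MVT2[OF True, of "pf \<theta>" "pf1 \<theta>"] pf_deriv assms by force
  then show ?thesis using True by (simp add: pf1_def divide_simps) (smt (verit) mult_pos_pos exp_gt_zero)
next
  case False
  then have yx: "y < x" using assms by auto
  obtain z where "y < z" "z < x" "pf \<theta> x - pf \<theta> y = (x - y) * pf1 \<theta> z"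
    using MVT2[OF yx, of "pf \<theta>" "pf1 \<theta>"] pf_deriv assms by force
  then show ?thesis using yx by (simp add: pf1_def)
qed

lemma deriv_from_bound:
  fixes g :: "real \<Rightarrow> real"
  assumes "\<delta> > 0" and bd: "\<And>t. \<bar>t\<bar> < \<delta> \<Longrightarrow> \<bar>g t - g 0 - D * t\<bar> \<le> C * \<bar>t\<bar> * \<bar>t\<bar>"
  shows "(g has_real_derivative D) (at 0)"
proof -
  have ev: "\<forall>\<^sub>F t in at 0. norm ((g t - g 0) / (t - 0) - D) \<le> C * \<bar>t\<bar>"
    unfolding eventually_at
  proof (intro exI[of _ \<delta>] conjI ballI impI)
    fix t :: real assume "t \<noteq> 0 \<and> dist t 0 < \<delta>"
    then have t: "t \<noteq> 0" "\<bar>t\<bar> < \<delta>" by auto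
    have "(g t - g 0) / (t - 0) - D = (g t - g 0 - D * t) / t" using t by (simp add: field_simps)
    then have "norm ((g t - g 0) / (t - 0) - D) = \<bar>g t - g 0 - D * t\<bar> / \<bar>t\<bar>" by simp
    also have "\<dots> \<le> C * \<bar>t\<bar>" using bd[OF t(2)] t by (simp add: divide_le_eq)
    finally show "norm ((g t - g 0) / (t - 0) - D) \<le> C * \<bar>t\<bar>" .
  qed (use assms in auto)
  have "((\<lambda>t. C * \<bar>t\<bar>) \<longlongrightarrow> 0) (at 0)"
    by (rule tendsto_eq_intros | simp)+
  then have "((\<lambda>t. (g t - g 0) / (t - 0) - D) \<longlongrightarrow> 0) (at 0)"
    using Lim_null_comparison[OF ev] by blast
  then have "((\<lambda>t. (g t - g 0) / (t - 0)) \<longlongrightarrow> D) (at 0)"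
    by (simp add: LIM_zero_iff)
  then show ?thesis by (simp add: has_field_derivative_iff)
qed

lemma cont_from_bound:
  fixes g :: "real \<Rightarrow> real"
  assumes "\<delta> > 0" and bd: "\<And>t. \<bar>t\<bar> < \<delta> \<Longrightarrow> \<bar>g t - g 0\<bar> \<le> C * \<bar>t\<bar>"
  shows "(g \<longlongrightarrow> g 0) (at 0)"
proof -
  have ev: "\<forall>\<^sub>F t in at 0. norm (g t - g 0) \<le> C * \<bar>t\<bar>"
    unfolding eventually_at using assms by (intro exI[of _ \<delta>]) auto
  have "((\<lambda>t. C * \<bar>t\<bar>) \<longlongrightarrow> 0) (at 0)"
    by (rule tendsto_eq_intros | simp)+
  then have "((\<lambda>t. g t - g 0) \<longlongrightarrow> 0) (at 0)"
    using Lim_null_comparison[OF ev] by blast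
  then show ?thesis by (simp add: LIM_zero_iff)
qed

lemma vec_deriv:
  fixes f :: "real \<Rightarrow> real^'n^'m"
  assumes d: "\<And>r s. ((\<lambda>t. f t $ r $ s) has_real_derivative D $ r $ s) (at 0)"
  shows "(f has_vector_derivative D) (at 0)"
proof -
  have q: "((\<lambda>t. (f t - f 0) /\<^sub>R (t - 0)) \<longlongrightarrow> D) (at 0)"
  proof -
    have c: "((\<lambda>t. (f t $ r $ s - f 0 $ r $ s) / (t - 0)) \<longlongrightarrow> D $ r $ s) (at 0)" for r s
      using d[of r s] by (simp add: has_field_derivative_iff)
    have "((\<lambda>t. \<chi> r s. (f t $ r $ s - f 0 $ r $ s) / (t - 0)) \<longlongrightarrow> (\<chi> r s. D $ r $ s)) (at 0)"
      by (intro tendsto_vec_lambda c)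
    moreover have "(\<lambda>t. \<chi> r s. (f t $ r $ s - f 0 $ r $ s) / (t - 0)) = (\<lambda>t. (f t - f 0) /\<^sub>R (t - 0))"
      by (auto simp: fun_eq_iff vec_eq_iff divide_inverse mult.commute)
    ultimately show ?thesis by simp
  qed
  have "((\<lambda>y. norm (f y - f 0 - (y - 0) *\<^sub>R D) / norm (y - 0)) \<longlongrightarrow> 0) (at 0)"
  proof -
    have l0: "((\<lambda>t. norm ((f t - f 0) /\<^sub>R (t - 0) - D)) \<longlongrightarrow> 0) (at 0)"
      using q by (simp add: tendsto_norm_zero_iff LIM_zero_iff)
    have ev: "\<forall>\<^sub>F t in at 0. norm ((f t - f 0) /\<^sub>R (t - 0) - D) = norm (f t - f 0 - (t - 0) *\<^sub>R D) / norm (t - 0)"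
      unfolding eventually_at
    proof (intro exI[of _ 1] conjI ballI impI)
      fix t :: real assume "t \<noteq> 0 \<and> dist t 0 < 1"
      then have t: "t \<noteq> 0" by auto
      have "inverse t *\<^sub>R (f t - f 0 - (t - 0) *\<^sub>R D) = inverse t *\<^sub>R (f t - f 0) - (inverse t * t) *\<^sub>R D"
        by (simp only: scaleR_diff_right scaleR_scaleR diff_zero)
      then have "(f t - f 0) /\<^sub>R (t - 0) - D = inverse t *\<^sub>R (f t - f 0 - (t - 0) *\<^sub>R D)"
        using t by simp
      then show "norm ((f t - f 0) /\<^sub>R (t - 0) - D) = norm (f t - f 0 - (t - 0) *\<^sub>R D) / norm (t - 0)"
        by (simp add: divide_inverse)
    qed simp
    show ?thesis using l0 unfolding tendsto_cong[OF ev] .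
  qed
  then show ?thesis
    unfolding has_vector_derivative_def has_derivative_iff_norm
    by (simp add: bounded_linear_scaleR_left)
qed



lemma sym_dot:
  fixes A :: "real^'n^'n"
  assumes "sym_mat A"
  shows "(A *v x) \<bullet> y = x \<bullet> (A *v y)"
proof -
  have "A *v x = x v* transpose A" by (simp add: transpose_matrix_vector[symmetric])
  also have "\<dots> = x v* A" using assms by (simp add: sym_mat_def)
  finally show ?thesis by (simp add: dot_lmul_matrix)
qed

lemma eig_exists:
  fixes A :: "real^'n^'n"
  assumes sA: "sym_mat A" and V: "subspace V" and inv: "\<forall>x\<in>V. A *v x \<in> V"
    and ne: "V \<noteq> {0}"
  shows "\<exists>x\<in>V. norm x = 1 \<and> A *v x = (x \<bullet> (A *v x)) *\<^sub>R x"
proof -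
  let ?K = "V \<inter> sphere 0 1"
  have cK: "compact ?K"
    by (simp add: V closed_subspace compact_Int_closed inf_commute closed_Int_compact)
  obtain y where y: "y \<in> V" "y \<noteq> 0" using ne V subspace_0 by blast
  have "y /\<^sub>R norm y \<in> ?K" using y V by (simp add: subspace_scale)
  then have neK: "?K \<noteq> {}" by blast
  have cont: "continuous_on ?K (\<lambda>x. x \<bullet> (A *v x))"
  proof -
    have "continuous_on ?K (\<lambda>x. A *v x)"
      by (intro linear_continuous_on matrix_vector_mul_bounded_linear)
    then show ?thesis by (intro continuous_intros)
  qed
  obtain x0 where x0: "x0 \<in> ?K" and mx: "\<And>z. z \<in> ?K \<Longrightarrow> z \<bullet> (A *v z) \<le> x0 \<bullet> (A *v x0)"
    using continuous_attains_sup[OF cK neK cont] by blast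
  define l where "l = x0 \<bullet> (A *v x0)"
  define w where "w = A *v x0 - l *\<^sub>R x0"
  have x0V: "x0 \<in> V" and nx0: "norm x0 = 1" using x0 by auto
  have x0x0: "x0 \<bullet> x0 = 1" using nx0 by (simp add: norm_eq_1)
  have wV: "w \<in> V" unfolding w_def using x0V inv V by (simp add: subspace_diff subspace_scale)
  have wx0: "x0 \<bullet> w = 0" unfolding w_def l_def by (simp add: inner_diff_right x0x0)
  have wAx0: "w \<bullet> (A *v x0) = w \<bullet> w"
  proof -
    have "A *v x0 = w + l *\<^sub>R x0" by (simp add: w_def)
    then show ?thesis using wx0 by (simp add: inner_add_right inner_commute)
  qed
  have key: "(x0 + s *\<^sub>R w) \<bullet> (A *v (x0 + s *\<^sub>R w)) \<le> l * ((x0 + s *\<^sub>R w) \<bullet> (x0 + s *\<^sub>R w))" for s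
  proof (cases "x0 + s *\<^sub>R w = 0")
    case True then show ?thesis by simp
  next
    case False
    define z where "z = x0 + s *\<^sub>R w"
    have zV: "z \<in> V" unfolding z_def using x0V wV V by (simp add: subspace_add subspace_scale)
    have "z /\<^sub>R norm z \<in> ?K" using zV V False by (simp add: subspace_scale z_def)
    then have "(z /\<^sub>R norm z) \<bullet> (A *v (z /\<^sub>R norm z)) \<le> l" using mx l_def by blast
    then have "(z \<bullet> (A *v z)) / (norm z)^2 \<le> l"
      by (simp add: matrix_vector_mult_scaleR power2_eq_square divide_inverse mult_ac)
    then have "z \<bullet> (A *v z) \<le> l * (norm z)^2" using False z_def
      by (simp add: divide_le_eq)
    then show ?thesis by (simp add: z_def power2_norm_eq_inner)
  qed
  have exp1: "(x0 + s *\<^sub>R w) \<bullet> (A *v (x0 + s *\<^sub>R w)) = l + 2 * s * (w \<bullet> w) + s^2 * (w \<bullet> (A *v w))" for s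
  proof -
    have "w \<bullet> (A *v x0) = x0 \<bullet> (A *v w)" using sym_dot[OF sA, of w x0] by (simp add: inner_commute)
    then show ?thesis using wAx0
      by (simp add: matrix_vector_right_distrib matrix_vector_mult_scaleR inner_add_left inner_add_right
          l_def power2_eq_square algebra_simps)
  qed
  have exp2: "(x0 + s *\<^sub>R w) \<bullet> (x0 + s *\<^sub>R w) = 1 + s^2 * (w \<bullet> w)" for s
    using wx0 x0x0 by (simp add: inner_add_left inner_add_right inner_commute power2_eq_square algebra_simps)
  define c where "c = l * (w \<bullet> w) - w \<bullet> (A *v w)"
  have ineq: "2 * s * (w \<bullet> w) \<le> s^2 * c" for s
  proof -
    have "l + 2 * s * (w \<bullet> w) + s^2 * (w \<bullet> (A *v w)) \<le> l * (1 + s^2 * (w \<bullet> w))"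
      using key[of s] unfolding exp1[of s] exp2[of s] .
    then show ?thesis by (simp add: c_def algebra_simps)
  qed
  have "w \<bullet> w = 0"
  proof (rule ccontr)
    assume nz: "w \<bullet> w \<noteq> 0"
    then have pos: "w \<bullet> w > 0" by (simp add: order_le_neq_trans)
    define s where "s = (w \<bullet> w) / (\<bar>c\<bar> + 1)"
    have sp: "s > 0" using pos by (simp add: s_def)
    have "2 * s * (w \<bullet> w) \<le> s * (s * c)" using ineq[of s] by (simp add: power2_eq_square)
    then have "2 * (w \<bullet> w) \<le> s * c" using sp by simp
    also have "s * c \<le> s * \<bar>c\<bar>" using sp by (simp add: mult_left_mono)
    also have "s * \<bar>c\<bar> < w \<bullet> w" using pos unfolding s_def
      by (simp add: field_simps)
    finally show False using pos by simp
  qed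
  then have "w = 0" by simp
  then show ?thesis using x0V nx0 unfolding w_def l_def by auto
qed

lemma spectral_subspace:
  fixes A :: "real^'n^'n"
  assumes sA: "sym_mat A"
  shows "subspace V \<Longrightarrow> (\<forall>x\<in>V. A *v x \<in> V) \<Longrightarrow>
    \<exists>B. B \<subseteq> V \<and> pairwise orthogonal B \<and> (\<forall>x\<in>B. norm x = 1 \<and> A *v x = (x \<bullet> (A *v x)) *\<^sub>R x) \<and> span B = V"
proof (induction "dim V" arbitrary: V rule: less_induct)
  case less
  show ?case
  proof (cases "V = {0}")
    case True
    then show ?thesis by (intro exI[of _ "{}"]) auto
  next
    case False
    obtain x0 where x0: "x0 \<in> V" "norm x0 = 1" and ex0: "A *v x0 = (x0 \<bullet> (A *v x0)) *\<^sub>R x0"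
      using eig_exists[OF sA less.prems False] by blast
    define l where "l = x0 \<bullet> (A *v x0)"
    have ex0l: "A *v x0 = l *\<^sub>R x0" unfolding l_def by (rule ex0)
    define V' where "V' = {y\<in>V. x0 \<bullet> y = 0}"
    have sV': "subspace V'" unfolding V'_def using less.prems(1)
      by (auto simp: subspace_def inner_add_right)
    have invV': "\<forall>x\<in>V'. A *v x \<in> V'"
    proof
      fix x assume "x \<in> V'"
      then have "x \<in> V" "x0 \<bullet> x = 0" by (auto simp: V'_def)
      moreover have "x0 \<bullet> (A *v x) = (A *v x0) \<bullet> x" using sym_dot[OF sA] by simp
      ultimately show "A *v x \<in> V'" using less.prems(2) ex0l by (auto simp: V'_def)
    qed
    have "x0 \<notin> V'" using x0 by (auto simp: V'_def norm_eq_1)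
    moreover have "V' \<subseteq> V" by (auto simp: V'_def)
    ultimately have "V' \<subset> V" using x0 by blast
    moreover have "span V' = V'" "span V = V" using sV' less.prems(1) by (auto simp: span_eq_iff)
    ultimately have "span V' \<subset> span V" by (simp add: span_eq_iff[THEN iffD2])
    then have "dim V' < dim V" by (rule dim_psubset)
    then obtain B' where B': "B' \<subseteq> V'" "pairwise orthogonal B'"
        "\<forall>x\<in>B'. norm x = 1 \<and> A *v x = (x \<bullet> (A *v x)) *\<^sub>R x" "span B' = V'"
      using less.hyps[OF _ sV' invV'] by blast
    define B where "B = insert x0 B'"
    have "B \<subseteq> V" using B'(1) x0 by (auto simp: B_def V'_def)
    moreover have "pairwise orthogonal B" using B'(1,2) unfolding B_def pairwise_insert
      by (auto simp: V'_def orthogonal_def inner_commute)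
    moreover have "\<forall>x\<in>B. norm x = 1 \<and> A *v x = (x \<bullet> (A *v x)) *\<^sub>R x"
      using B'(3) x0 ex0 by (auto simp: B_def)
    moreover have "span B = V"
    proof
      show "span B \<subseteq> V" using \<open>B \<subseteq> V\<close> less.prems(1) by (simp add: span_minimal)
      show "V \<subseteq> span B"
      proof
        fix v assume vV: "v \<in> V"
        define r where "r = v - (x0 \<bullet> v) *\<^sub>R x0"
        have "r \<in> V'" unfolding V'_def r_def using vV x0 less.prems(1)
          by (auto simp: subspace_diff subspace_scale inner_diff_right norm_eq_1)
        then have "r \<in> span B" using B'(4) span_mono[of B' B] by (auto simp: B_def)
        moreover have "(x0 \<bullet> v) *\<^sub>R x0 \<in> span B" by (simp add: B_def span_base span_scale)
        ultimately have "r + (x0 \<bullet> v) *\<^sub>R x0 \<in> span B" by (rule span_add)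
        then show "v \<in> span B" by (simp add: r_def)
      qed
    qed
    ultimately show ?thesis by blast
  qed
qed

lemma diag_mat_mult_right: "(M ** diag_mat d) $ i $ j = M $ i $ j * d $ j"
  by (simp add: diag_mat_def matrix_matrix_mult_def if_distrib cong: if_cong)

lemma diag_mat_mult_left: "(diag_mat d ** M) $ i $ j = d $ i * M $ i $ j"
proof -
  have "(diag_mat d ** M) $ i $ j = (\<Sum>k\<in>UNIV. if k = i then d $ i * M $ i $ j else 0)"
    unfolding diag_mat_def matrix_matrix_mult_def vec_lambda_beta by (intro sum.cong) auto
  then show ?thesis by simp
qed

lemma diag_mat_vec: "diag_mat d *v w = (\<chi> i. d $ i * w $ i)"
proof -
  have "(diag_mat d *v w) $ i = (\<Sum>k\<in>UNIV. if k = i then d $ i * w $ i else 0)" for i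
    unfolding diag_mat_def matrix_vector_mult_def vec_lambda_beta by (intro sum.cong) auto
  then show ?thesis by (simp add: vec_eq_iff)
qed

lemma mult_column: "(M ** U) $ i $ j = (M *v column j U) $ i"
  by (simp add: matrix_matrix_mult_def matrix_vector_mult_def column_def)

lemma orth_TU: "orthogonal_matrix U \<Longrightarrow> transpose U ** U = mat 1"
  by (simp add: orthogonal_matrix_def)

lemma orth_UT: "orthogonal_matrix U \<Longrightarrow> U ** transpose U = mat 1"
  by (simp add: orthogonal_matrix_def)

lemma spectral:
  fixes A :: "real^'n^'n"
  assumes sA: "sym_mat A"
  shows "\<exists>U d. orthogonal_matrix U \<and> A = U ** diag_mat d ** transpose U"
proof -
  obtain B where B: "pairwise orthogonal B" "\<forall>x\<in>B. norm x = 1 \<and> A *v x = (x \<bullet> (A *v x)) *\<^sub>R x"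
      "span B = UNIV"
    using spectral_subspace[OF sA, of UNIV] by auto
  have indB: "independent B" using B(1,2) by (intro pairwise_orthogonal_independent) auto
  then have finB: "finite B" using independent_imp_finite by blast
  have "card B = dim (UNIV :: (real^'n) set)" using dim_span_eq_card_independent[OF indB] B(3) by simp
  then have cB: "card B = card (UNIV :: 'n set)" by simp
  obtain g where g: "bij_betw g (UNIV :: 'n set) B"
    using finite_same_card_bij[OF finite_class.finite_UNIV finB] cB by metis
  define U :: "real^'n^'n" where "U = (\<chi> i j. g j $ i)"
  define d :: "real^'n" where "d = (\<chi> j. g j \<bullet> (A *v g j))"
  have colU: "column j U = g j" for j by (simp add: U_def column_def vec_eq_iff)
  have gB: "g j \<in> B" for j using g by (auto simp: bij_betw_def)
  have oU: "orthogonal_matrix U"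
    unfolding orthogonal_matrix_orthonormal_columns colU
  proof (intro conjI allI impI)
    show "norm (g i) = 1" for i using B(2) gB by auto
    show "orthogonal (g i) (g j)" if "i \<noteq> j" for i j
    proof -
      have "g i \<noteq> g j" using g that by (auto simp: bij_betw_def inj_on_def)
      then show ?thesis using B(1) gB unfolding pairwise_def by blast
    qed
  qed
  have AU: "A ** U = U ** diag_mat d"
  proof -
    have "(A ** U) $ i $ j = (U ** diag_mat d) $ i $ j" for i j
    proof -
      have "(A ** U) $ i $ j = (A *v g j) $ i" by (simp add: mult_column colU)
      also have "\<dots> = d $ j * g j $ i"
      proof -
        have "A *v g j = (g j \<bullet> (A *v g j)) *\<^sub>R g j" using B(2) gB[of j] by blast
        from arg_cong[where f="\<lambda>v. v $ i", OF this] show ?thesis by (simp add: d_def)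
      qed
      finally show ?thesis by (simp add: diag_mat_mult_right U_def mult.commute)
    qed
    then show ?thesis by (simp add: vec_eq_iff)
  qed
  have "A = A ** (U ** transpose U)" using orth_UT[OF oU] by simp
  also have "\<dots> = U ** diag_mat d ** transpose U" by (simp add: matrix_mul_assoc AU)
  finally show ?thesis using oU by blast
qed

lemma eig_col:
  fixes U :: "real^'n^'n"
  assumes oU: "orthogonal_matrix U" and A: "A = U ** diag_mat d ** transpose U"
  shows "A *v column j U = d $ j *\<^sub>R column j U"
proof -
  have "A ** U = U ** diag_mat d ** (transpose U ** U)" by (simp add: A matrix_mul_assoc)
  then have AU: "A ** U = U ** diag_mat d" by (simp add: orth_TU[OF oU])
  have "(A *v column j U) $ i = (d $ j *\<^sub>R column j U) $ i" for i
    using mult_column[of A U i j] by (simp add: AU diag_mat_mult_right column_def mult.commute)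
  then show ?thesis by (simp add: vec_eq_iff)
qed

lemma fun_char:
  fixes U :: "real^'n^'n"
  assumes oU: "orthogonal_matrix U" and A: "A = U ** diag_mat d ** transpose U"
    and ev: "A *v v = c *\<^sub>R v"
  shows "(U ** diag_mat (\<chi> i. f (d $ i)) ** transpose U) *v v = f c *\<^sub>R v"
proof -
  define w where "w = transpose U *v v"
  have vw: "v = U *v w" unfolding w_def matrix_vector_mul_assoc orth_UT[OF oU] by simp
  have "U *v (diag_mat d *v w) = A *v v" by (simp add: A w_def matrix_vector_mul_assoc matrix_mul_assoc del: transpose_matrix_vector)
  also have "\<dots> = U *v (c *\<^sub>R w)" using ev vw by (simp add: matrix_vector_mult_scaleR)
  finally have "transpose U *v (U *v (diag_mat d *v w)) = transpose U *v (U *v (c *\<^sub>R w))" by simp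
  then have dw: "diag_mat d *v w = c *\<^sub>R w"
    unfolding matrix_vector_mul_assoc matrix_mul_assoc orth_TU[OF oU] by simp
  have "d $ i * w $ i = c * w $ i" for i
    using arg_cong[where f="\<lambda>x. x $ i", OF dw] by (simp add: diag_mat_vec)
  then have "f (d $ i) * w $ i = f c * w $ i" for i
    by (cases "w $ i = 0") auto
  then have fw: "diag_mat (\<chi> i. f (d $ i)) *v w = f c *\<^sub>R w" by (simp add: diag_mat_vec vec_eq_iff)
  have "(U ** diag_mat (\<chi> i. f (d $ i)) ** transpose U) *v v = U *v (diag_mat (\<chi> i. f (d $ i)) *v w)"
    by (simp add: w_def matrix_vector_mul_assoc matrix_mul_assoc del: transpose_matrix_vector)
  also have "\<dots> = f c *\<^sub>R v" using vw by (simp add: fw matrix_vector_mult_scaleR)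
  finally show ?thesis .
qed

lemma mat_eq_by_cols:
  fixes U :: "real^'n^'n"
  assumes oU: "orthogonal_matrix U" and eq: "\<And>j. M *v column j U = N *v column j U"
  shows "M = N"
proof -
  have "M ** U = N ** U" using eq by (simp add: vec_eq_iff mult_column)
  then have "M ** U ** transpose U = N ** U ** transpose U" by simp
  then show ?thesis by (simp add: matrix_mul_assoc[symmetric] orth_UT[OF oU])
qed

lemma mat_fun_eq:
  fixes U :: "real^'n^'n"
  assumes oU: "orthogonal_matrix U" and A: "A = U ** diag_mat d ** transpose U"
  shows "mat_fun f A = U ** diag_mat (\<chi> i. f (d $ i)) ** transpose U"
  unfolding mat_fun_def
proof (rule the_equality)
  show "\<exists>U' d'. orthogonal_matrix U' \<and> A = U' ** diag_mat d' ** transpose U' \<and>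
      U ** diag_mat (\<chi> i. f (d $ i)) ** transpose U = U' ** diag_mat (\<chi> i. f (d' $ i)) ** transpose U'"
    using oU A by blast
next
  fix M assume "\<exists>U' d'. orthogonal_matrix U' \<and> A = U' ** diag_mat d' ** transpose U' \<and>
      M = U' ** diag_mat (\<chi> i. f (d' $ i)) ** transpose U'"
  then obtain U' d' where o2: "orthogonal_matrix U'" and A2: "A = U' ** diag_mat d' ** transpose U'"
    and M: "M = U' ** diag_mat (\<chi> i. f (d' $ i)) ** transpose U'" by blast
  show "M = U ** diag_mat (\<chi> i. f (d $ i)) ** transpose U"
  proof (rule mat_eq_by_cols[OF oU])
    fix j
    have ev: "A *v column j U = d $ j *\<^sub>R column j U" by (rule eig_col[OF oU A])
    show "M *v column j U = (U ** diag_mat (\<chi> i. f (d $ i)) ** transpose U) *v column j U"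
      unfolding M fun_char[OF o2 A2 ev] fun_char[OF oU A ev] ..
  qed
qed

lemma conj_entry:
  "(U ** diag_mat x ** transpose U) $ i $ j = (\<Sum>k\<in>UNIV. U $ i $ k * x $ k * U $ j $ k)"
  by (simp add: matrix_matrix_mult_def diag_mat_mult_right[unfolded matrix_matrix_mult_def, simplified]
      transpose_def)

lemma conj_scale:
  "c *\<^sub>R (U ** diag_mat x ** transpose U) = U ** diag_mat (\<chi> i. c * x $ i) ** transpose U"
  by (simp add: vec_eq_iff conj_entry sum_distrib_left mult_ac)


lemma mat_pow_eq:
  fixes U :: "real^'n^'n"
  assumes oU: "orthogonal_matrix U" and A: "A = U ** diag_mat d ** transpose U"
  shows "mat_pow \<theta> A = U ** diag_mat (\<chi> i. exp (\<theta> * ln (d $ i))) ** transpose U"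
proof -
  have "\<theta> *\<^sub>R mat_log A = U ** diag_mat (\<chi> i. \<theta> * ln (d $ i)) ** transpose U"
    unfolding mat_log_def mat_fun_eq[OF oU A] conj_scale by simp
  then show ?thesis unfolding mat_pow_def mat_exp_def by (simp add: mat_fun_eq[OF oU])
qed

lemma phi_eq:
  fixes U :: "real^'n^'n"
  assumes oU: "orthogonal_matrix U" and A: "A = U ** diag_mat d ** transpose U"
  shows "phi \<theta> A = U ** diag_mat (\<chi> i. pf \<theta> (d $ i)) ** transpose U"
proof (cases "\<theta> = 0")
  case True
  then show ?thesis by (simp add: phi_def pf_def mat_log_def mat_fun_eq[OF oU A])
next
  case False
  then show ?thesis by (simp add: phi_def pf_def mat_pow_eq[OF oU A] conj_scale divide_inverse mult.commute)
qed

lemma spd_decomp: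
  fixes S :: "real^'n^'n"
  assumes "spd S"
  obtains U d where "orthogonal_matrix U" "S = U ** diag_mat d ** transpose U" "\<And>i. d $ i > 0"
proof -
  have sS: "sym_mat S" using assms by (simp add: spd_def)
  obtain U d where oU: "orthogonal_matrix U" and S: "S = U ** diag_mat d ** transpose U"
    using spectral[OF sS] by blast
  have "d $ i > 0" for i
  proof -
    have n1: "norm (column i U) = 1" using oU by (simp add: orthogonal_matrix_orthonormal_columns)
    then have "column i U \<noteq> 0" by auto
    then have "column i U \<bullet> (S *v column i U) > 0" using assms by (simp add: spd_def)
    also have "column i U \<bullet> (S *v column i U) = d $ i"
      using n1 by (simp add: eig_col[OF oU S] norm_eq_1)
    finally show ?thesis .
  qed
  then show ?thesis using that oU S by blast
qed



lemma quad_sum: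
  fixes V :: "real^'n^'n"
  shows "((V ** diag_mat g ** transpose V) *v a) \<bullet> b
       = (\<Sum>k\<in>UNIV. g $ k * (column k V \<bullet> a) * (column k V \<bullet> b))"
proof -
  have "((V ** diag_mat g ** transpose V) *v a) \<bullet> b
      = (\<Sum>i\<in>UNIV. (\<Sum>j\<in>UNIV. (\<Sum>k\<in>UNIV. V $ i $ k * g $ k * V $ j $ k) * a $ j) * b $ i)"
    by (simp add: inner_vec_def matrix_vector_mult_def conj_entry)
  also have "\<dots> = (\<Sum>i\<in>UNIV. \<Sum>j\<in>UNIV. \<Sum>k\<in>UNIV. g $ k * (V $ j $ k * a $ j) * (V $ i $ k * b $ i))"
    by (simp add: sum_distrib_left sum_distrib_right mult_ac)
  also have "\<dots> = (\<Sum>i\<in>UNIV. \<Sum>k\<in>UNIV. \<Sum>j\<in>UNIV. g $ k * (V $ j $ k * a $ j) * (V $ i $ k * b $ i))"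
    by (rule sum.cong[OF refl]) (rule sum.swap)
  also have "\<dots> = (\<Sum>k\<in>UNIV. \<Sum>i\<in>UNIV. \<Sum>j\<in>UNIV. g $ k * (V $ j $ k * a $ j) * (V $ i $ k * b $ i))"
    by (rule sum.swap)
  also have "\<dots> = (\<Sum>k\<in>UNIV. \<Sum>j\<in>UNIV. \<Sum>i\<in>UNIV. g $ k * (V $ j $ k * a $ j) * (V $ i $ k * b $ i))"
    by (rule sum.cong[OF refl]) (rule sum.swap)
  also have "\<dots> = (\<Sum>k\<in>UNIV. g $ k * (column k V \<bullet> a) * (column k V \<bullet> b))"
    by (simp add: inner_vec_def column_def sum_distrib_left sum_distrib_right mult_ac)
  finally show ?thesis .
qed

lemma diag_one: "diag_mat (\<chi> i. 1) = mat 1"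
  by (simp add: diag_mat_def mat_def vec_eq_iff)

lemma parseval:
  fixes V :: "real^'n^'n"
  assumes oV: "orthogonal_matrix V"
  shows "(\<Sum>k\<in>UNIV. (column k V \<bullet> a) * (column k V \<bullet> b)) = a \<bullet> b"
proof -
  have "(V ** diag_mat (\<chi> i. 1) ** transpose V) = mat 1" by (simp add: diag_one orth_UT[OF oV])
  then show ?thesis using quad_sum[of V "\<chi> i. 1" a b] by simp
qed

lemma cs_sum:
  fixes V :: "real^'n^'n"
  assumes oV: "orthogonal_matrix V"
  shows "(\<Sum>k\<in>UNIV. \<bar>column k V \<bullet> a\<bar> * \<bar>column k V \<bullet> b\<bar>) \<le> norm a * norm b"
proof -
  define p where "p = (\<chi> k. \<bar>column k V \<bullet> a\<bar>)"
  define q where "q = (\<chi> k. \<bar>column k V \<bullet> b\<bar>)"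
  have "p \<bullet> q \<le> norm p * norm q" by (rule norm_cauchy_schwarz)
  moreover have "p \<bullet> q = (\<Sum>k\<in>UNIV. \<bar>column k V \<bullet> a\<bar> * \<bar>column k V \<bullet> b\<bar>)"
    by (simp add: p_def q_def inner_vec_def)
  moreover have "norm p = norm a"
  proof -
    have "p \<bullet> p = a \<bullet> a" using parseval[OF oV, of a a] by (simp add: p_def inner_vec_def abs_mult_self_eq)
    then show ?thesis by (simp add: norm_eq_sqrt_inner)
  qed
  moreover have "norm q = norm b"
  proof -
    have "q \<bullet> q = b \<bullet> b" using parseval[OF oV, of b b] by (simp add: q_def inner_vec_def abs_mult_self_eq)
    then show ?thesis by (simp add: norm_eq_sqrt_inner)
  qed
  ultimately show ?thesis by simp
qed

lemma conj_sym:
  fixes V :: "real^'n^'n"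
  shows "sym_mat (V ** diag_mat g ** transpose V)"
proof -
  have "transpose (V ** diag_mat g ** transpose V) $ i $ j = (V ** diag_mat g ** transpose V) $ i $ j" for i j
  proof -
    have "transpose (V ** diag_mat g ** transpose V) $ i $ j = (V ** diag_mat g ** transpose V) $ j $ i"
      by (simp add: transpose_def)
    also have "\<dots> = (V ** diag_mat g ** transpose V) $ i $ j" unfolding conj_entry by (simp add: mult_ac)
    finally show ?thesis .
  qed
  then show ?thesis by (simp add: sym_mat_def vec_eq_iff)
qed

lemma diag_mult: "diag_mat a ** diag_mat b = diag_mat (\<chi> i. a $ i * b $ i)"
  by (simp add: vec_eq_iff diag_mat_mult_right) (simp add: diag_mat_def)

lemma conj_comm:
  fixes V :: "real^'n^'n"
  assumes oV: "orthogonal_matrix V"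
  shows "(V ** diag_mat a ** transpose V) ** (V ** diag_mat b ** transpose V)
       = (V ** diag_mat b ** transpose V) ** (V ** diag_mat a ** transpose V)"
proof -
  have e: "(V ** diag_mat x ** transpose V) ** (V ** diag_mat y ** transpose V)
      = V ** diag_mat (\<chi> i. x $ i * y $ i) ** transpose V" for x y
  proof -
    have "(V ** diag_mat x ** transpose V) ** (V ** diag_mat y ** transpose V)
      = V ** diag_mat x ** (transpose V ** V) ** diag_mat y ** transpose V"
      by (simp add: matrix_mul_assoc)
    also have "\<dots> = V ** (diag_mat x ** diag_mat y) ** transpose V"
      by (simp add: orth_TU[OF oV] matrix_mul_assoc)
    finally show ?thesis by (simp add: diag_mult)
  qed
  show ?thesis unfolding e by (simp add: mult.commute)
qed

lemma entry_eq:
  fixes U :: "real^'n^'n"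
  shows "(transpose U ** M ** U) $ i $ j = column i U \<bullet> (M *v column j U)"
proof -
  have "(transpose U ** M ** U) $ i $ j = ((transpose U ** M) *v column j U) $ i" by (rule mult_column)
  also have "\<dots> = (transpose U *v (M *v column j U)) $ i" by (simp add: matrix_vector_mul_assoc del: transpose_matrix_vector)
  also have "\<dots> = column i U \<bullet> (M *v column j U)"
    by (simp add: matrix_vector_mult_def inner_vec_def column_def transpose_def del: transpose_matrix_vector)
  finally show ?thesis .
qed

lemma mat_recon:
  fixes U :: "real^'n^'n"
  assumes oU: "orthogonal_matrix U"
  shows "M = U ** (transpose U ** M ** U) ** transpose U"
  by (simp add: matrix_mul_assoc orth_UT[OF oU]) (simp add: matrix_mul_assoc[symmetric] orth_UT[OF oU])

lemma scaleR_mv: "((c::real) *\<^sub>R (M::real^'n^'m)) *v x = c *\<^sub>R (M *v x)"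
  by (simp add: vec_eq_iff matrix_vector_mult_def sum_distrib_left mult_ac real_scaleR_def)

lemma orth_cols:
  fixes U :: "real^'n^'n"
  assumes oU: "orthogonal_matrix U"
  shows "column i U \<bullet> column j U = (if i = j then 1 else 0)"
  using oU unfolding orthogonal_matrix_orthonormal_columns
  by (auto simp: orthogonal_def norm_eq_1)

lemma expand:
  fixes U V X :: "real^'n^'n"
  assumes oU: "orthogonal_matrix U" and S: "S = U ** diag_mat lam ** transpose U"
    and oV: "orthogonal_matrix V"
    and A: "S + t *\<^sub>R X = V ** diag_mat mu ** transpose V"
    and hT: "\<forall>a y. a \<in> {m..M} \<longrightarrow> y \<in> {m..M} \<longrightarrow> \<bar>pf \<theta> y - pf \<theta> a - pf1 \<theta> a * (y - a)\<bar> \<le> K * (y - a)^2"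
    and lamr: "lam $ i \<in> {m..M}" and mur: "\<And>k. mu $ k \<in> {m..M}"
  shows "\<bar>column i U \<bullet> (phi \<theta> (S + t *\<^sub>R X) *v column j U)
            - pf \<theta> (lam $ i) * (column i U \<bullet> column j U)
            - pf1 \<theta> (lam $ i) * t * (column i U \<bullet> (X *v column j U))\<bar>
         \<le> K * (\<Sum>k\<in>UNIV. (mu $ k - lam $ i)^2 * \<bar>column k V \<bullet> column i U\<bar> * \<bar>column k V \<bullet> column j U\<bar>)"
proof -
  define W where "W k = column k V \<bullet> column i U" for k
  define Z where "Z k = column k V \<bullet> column j U" for k
  define li where "li = lam $ i"
  have e: "column i U \<bullet> (phi \<theta> (S + t *\<^sub>R X) *v column j U) = (\<Sum>k\<in>UNIV. pf \<theta> (mu $ k) * W k * Z k)"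
  proof -
    have "column i U \<bullet> (phi \<theta> (S + t *\<^sub>R X) *v column j U) = (phi \<theta> (S + t *\<^sub>R X) *v column j U) \<bullet> column i U"
      by (simp add: inner_commute)
    also have "\<dots> = (\<Sum>k\<in>UNIV. (\<chi> i. pf \<theta> (mu $ i)) $ k * Z k * W k)"
      unfolding phi_eq[OF oV A] quad_sum Z_def W_def ..
    finally show ?thesis by (simp add: mult_ac)
  qed
  have d: "column i U \<bullet> column j U = (\<Sum>k\<in>UNIV. W k * Z k)"
    using parseval[OF oV] by (simp add: W_def Z_def)
  have mu_sum: "(\<Sum>k\<in>UNIV. mu $ k * W k * Z k) = li * (column i U \<bullet> column j U) + t * (column i U \<bullet> (X *v column j U))"
  proof -
    have "(\<Sum>k\<in>UNIV. mu $ k * W k * Z k) = ((S + t *\<^sub>R X) *v column j U) \<bullet> column i U"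
      unfolding A quad_sum by (simp add: W_def Z_def mult_ac)
    also have "\<dots> = lam $ j * (column j U \<bullet> column i U) + t * ((X *v column j U) \<bullet> column i U)"
      by (simp add: matrix_vector_mult_add_rdistrib inner_add_left eig_col[OF oU S] scaleR_mv)
    also have "lam $ j * (column j U \<bullet> column i U) = li * (column i U \<bullet> column j U)"
      by (simp add: orth_cols[OF oU] li_def)
    finally show ?thesis by (simp add: inner_commute)
  qed
  have diff: "column i U \<bullet> (phi \<theta> (S + t *\<^sub>R X) *v column j U)
            - pf \<theta> li * (column i U \<bullet> column j U)
            - pf1 \<theta> li * t * (column i U \<bullet> (X *v column j U))
     = (\<Sum>k\<in>UNIV. (pf \<theta> (mu $ k) - pf \<theta> li - pf1 \<theta> li * (mu $ k - li)) * W k * Z k)"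
  proof -
    have "(\<Sum>k\<in>UNIV. (mu $ k - li) * W k * Z k) = (\<Sum>k\<in>UNIV. mu $ k * W k * Z k) - li * (\<Sum>k\<in>UNIV. W k * Z k)"
      by (simp add: algebra_simps sum_subtractf sum_distrib_left)
    then have "t * (column i U \<bullet> (X *v column j U)) = (\<Sum>k\<in>UNIV. (mu $ k - li) * W k * Z k)"
      using mu_sum d by simp
    then have "pf1 \<theta> li * (t * (column i U \<bullet> (X *v column j U))) = pf1 \<theta> li * (\<Sum>k\<in>UNIV. (mu $ k - li) * W k * Z k)"
      by simp
    then have "pf1 \<theta> li * t * (column i U \<bullet> (X *v column j U)) = (\<Sum>k\<in>UNIV. pf1 \<theta> li * (mu $ k - li) * W k * Z k)"
      by (simp add: sum_distrib_left mult.assoc)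
    moreover have "pf \<theta> li * (column i U \<bullet> column j U) = (\<Sum>k\<in>UNIV. pf \<theta> li * W k * Z k)"
      using d by (simp add: sum_distrib_left mult_ac)
    ultimately show ?thesis using e
      by (simp add: sum_subtractf left_diff_distrib)
  qed
  have "\<bar>\<Sum>k\<in>UNIV. (pf \<theta> (mu $ k) - pf \<theta> li - pf1 \<theta> li * (mu $ k - li)) * W k * Z k\<bar>
      \<le> (\<Sum>k\<in>UNIV. \<bar>(pf \<theta> (mu $ k) - pf \<theta> li - pf1 \<theta> li * (mu $ k - li)) * W k * Z k\<bar>)"
    by (rule sum_abs)
  also have "\<dots> \<le> (\<Sum>k\<in>UNIV. K * ((mu $ k - li)^2 * \<bar>W k\<bar> * \<bar>Z k\<bar>))"
  proof (rule sum_mono)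
    fix k
    have b: "\<bar>pf \<theta> (mu $ k) - pf \<theta> li - pf1 \<theta> li * (mu $ k - li)\<bar> \<le> K * (mu $ k - li)^2"
      using hT lamr mur[of k] by (simp add: li_def)
    have "\<bar>(pf \<theta> (mu $ k) - pf \<theta> li - pf1 \<theta> li * (mu $ k - li)) * W k * Z k\<bar>
        = \<bar>pf \<theta> (mu $ k) - pf \<theta> li - pf1 \<theta> li * (mu $ k - li)\<bar> * (\<bar>W k\<bar> * \<bar>Z k\<bar>)"
      by (simp add: abs_mult)
    also have "\<dots> \<le> K * (mu $ k - li)^2 * (\<bar>W k\<bar> * \<bar>Z k\<bar>)"
      by (rule mult_right_mono[OF b]) simp
    finally show "\<bar>(pf \<theta> (mu $ k) - pf \<theta> li - pf1 \<theta> li * (mu $ k - li)) * W k * Z k\<bar>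
        \<le> K * ((mu $ k - li)^2 * \<bar>W k\<bar> * \<bar>Z k\<bar>)" by (simp add: mult_ac)
  qed
  also have "\<dots> = K * (\<Sum>k\<in>UNIV. (mu $ k - lam $ i)^2 * \<bar>column k V \<bullet> column i U\<bar> * \<bar>column k V \<bullet> column j U\<bar>)"
    by (simp add: sum_distrib_left W_def Z_def li_def)
  finally show ?thesis using diff by (simp add: li_def)
qed

lemma col_norm: "orthogonal_matrix (U::real^'n^'n) \<Longrightarrow> norm (column i U) = 1"
  by (simp add: orthogonal_matrix_orthonormal_columns)

lemma mu_rel:
  fixes U V X :: "real^'n^'n"
  assumes oU: "orthogonal_matrix U" and S: "S = U ** diag_mat lam ** transpose U"
    and oV: "orthogonal_matrix V"
    and A: "S + t *\<^sub>R X = V ** diag_mat mu ** transpose V"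
  shows "(mu $ k - lam $ i) * (column k V \<bullet> column i U) = t * (column k V \<bullet> (X *v column i U))"
proof -
  have sA: "sym_mat (S + t *\<^sub>R X)" unfolding A by (rule conj_sym)
  have "mu $ k * (column k V \<bullet> column i U) = ((S + t *\<^sub>R X) *v column k V) \<bullet> column i U"
    by (simp add: eig_col[OF oV A])
  also have "\<dots> = column k V \<bullet> ((S + t *\<^sub>R X) *v column i U)" by (rule sym_dot[OF sA])
  also have "\<dots> = lam $ i * (column k V \<bullet> column i U) + t * (column k V \<bullet> (X *v column i U))"
    by (simp add: matrix_vector_mult_add_rdistrib inner_add_right eig_col[OF oU S] scaleR_mv)
  finally show ?thesis by (simp add: algebra_simps)
qed

lemma bound_eq:
  fixes U V X :: "real^'n^'n"
  assumes oU: "orthogonal_matrix U" and S: "S = U ** diag_mat lam ** transpose U"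
    and oV: "orthogonal_matrix V"
    and A: "S + t *\<^sub>R X = V ** diag_mat mu ** transpose V"
    and eq: "lam $ i = lam $ j"
  shows "(\<Sum>k\<in>UNIV. (mu $ k - lam $ i)^2 * \<bar>column k V \<bullet> column i U\<bar> * \<bar>column k V \<bullet> column j U\<bar>)
    \<le> t^2 * (norm (X *v column i U) * norm (X *v column j U))"
proof -
  have "(mu $ k - lam $ i)^2 * \<bar>column k V \<bullet> column i U\<bar> * \<bar>column k V \<bullet> column j U\<bar>
      = t^2 * (\<bar>column k V \<bullet> (X *v column i U)\<bar> * \<bar>column k V \<bullet> (X *v column j U)\<bar>)" for k
  proof -
    have "(mu $ k - lam $ i)^2 * \<bar>column k V \<bullet> column i U\<bar> * \<bar>column k V \<bullet> column j U\<bar>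
       = \<bar>(mu $ k - lam $ i) * (column k V \<bullet> column i U)\<bar> * \<bar>(mu $ k - lam $ j) * (column k V \<bullet> column j U)\<bar>"
      by (simp add: eq abs_mult power2_eq_square mult_ac)
    also have "\<dots> = t^2 * (\<bar>column k V \<bullet> (X *v column i U)\<bar> * \<bar>column k V \<bullet> (X *v column j U)\<bar>)"
      unfolding mu_rel[OF oU S oV A] by (simp add: abs_mult power2_eq_square mult_ac)
    finally show ?thesis .
  qed
  then have "(\<Sum>k\<in>UNIV. (mu $ k - lam $ i)^2 * \<bar>column k V \<bullet> column i U\<bar> * \<bar>column k V \<bullet> column j U\<bar>)
     = t^2 * (\<Sum>k\<in>UNIV. \<bar>column k V \<bullet> (X *v column i U)\<bar> * \<bar>column k V \<bullet> (X *v column j U)\<bar>)"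
    by (simp add: sum_distrib_left)
  also have "\<dots> \<le> t^2 * (norm (X *v column i U) * norm (X *v column j U))"
    by (rule mult_left_mono[OF cs_sum[OF oV]]) simp
  finally show ?thesis .
qed

lemma bound_gen:
  fixes U V X :: "real^'n^'n"
  assumes oU: "orthogonal_matrix U" and S: "S = U ** diag_mat lam ** transpose U"
    and oV: "orthogonal_matrix V"
    and A: "S + t *\<^sub>R X = V ** diag_mat mu ** transpose V"
    and R: "\<And>k. \<bar>mu $ k - lam $ i\<bar> \<le> R"
  shows "(\<Sum>k\<in>UNIV. (mu $ k - lam $ i)^2 * \<bar>column k V \<bullet> column i U\<bar> * \<bar>column k V \<bullet> column j U\<bar>)
    \<le> R * \<bar>t\<bar> * norm (X *v column i U)"
proof -
  have "(mu $ k - lam $ i)^2 * \<bar>column k V \<bullet> column i U\<bar> * \<bar>column k V \<bullet> column j U\<bar>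
      \<le> R * \<bar>t\<bar> * (\<bar>column k V \<bullet> (X *v column i U)\<bar> * \<bar>column k V \<bullet> column j U\<bar>)" for k
  proof -
    have "(mu $ k - lam $ i)^2 * \<bar>column k V \<bullet> column i U\<bar> * \<bar>column k V \<bullet> column j U\<bar>
       = \<bar>mu $ k - lam $ i\<bar> * (\<bar>(mu $ k - lam $ i) * (column k V \<bullet> column i U)\<bar> * \<bar>column k V \<bullet> column j U\<bar>)"
      by (simp add: abs_mult power2_eq_square mult_ac)
    also have "\<dots> = \<bar>mu $ k - lam $ i\<bar> * (\<bar>t\<bar> * (\<bar>column k V \<bullet> (X *v column i U)\<bar> * \<bar>column k V \<bullet> column j U\<bar>))"
      unfolding mu_rel[OF oU S oV A] by (simp add: abs_mult mult_ac)
    also have "\<dots> \<le> R * (\<bar>t\<bar> * (\<bar>column k V \<bullet> (X *v column i U)\<bar> * \<bar>column k V \<bullet> column j U\<bar>))"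
      by (rule mult_right_mono[OF R]) simp
    finally show ?thesis by (simp add: mult_ac)
  qed
  then have "(\<Sum>k\<in>UNIV. (mu $ k - lam $ i)^2 * \<bar>column k V \<bullet> column i U\<bar> * \<bar>column k V \<bullet> column j U\<bar>)
     \<le> (\<Sum>k\<in>UNIV. R * \<bar>t\<bar> * (\<bar>column k V \<bullet> (X *v column i U)\<bar> * \<bar>column k V \<bullet> column j U\<bar>))"
    by (rule sum_mono)
  also have "\<dots> = R * \<bar>t\<bar> * (\<Sum>k\<in>UNIV. \<bar>column k V \<bullet> (X *v column i U)\<bar> * \<bar>column k V \<bullet> column j U\<bar>)"
    by (simp add: sum_distrib_left)
  also have "\<dots> \<le> R * \<bar>t\<bar> * (norm (X *v column i U) * norm (column j U))"
  proof (rule mult_left_mono[OF cs_sum[OF oV]])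
    have "0 \<le> \<bar>mu $ k - lam $ i\<bar>" for k by simp
    then have "0 \<le> R" using R order_trans by blast
    then show "0 \<le> R * \<bar>t\<bar>" by simp
  qed
  finally show ?thesis by (simp add: col_norm[OF oU])
qed

lemma mu_range:
  fixes U V X :: "real^'n^'n"
  assumes oU: "orthogonal_matrix U" and S: "S = U ** diag_mat lam ** transpose U"
    and oV: "orthogonal_matrix V"
    and A: "S + t *\<^sub>R X = V ** diag_mat mu ** transpose V"
    and lr: "\<And>i. lam $ i \<in> {lo..hi}"
    and cX: "\<And>v. norm (X *v v) \<le> cX * norm v"
  shows "mu $ k \<in> {lo - \<bar>t\<bar> * cX .. hi + \<bar>t\<bar> * cX}"
proof -
  let ?v = "column k V"
  have nv: "norm ?v = 1" by (rule col_norm[OF oV])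
  have vv: "?v \<bullet> ?v = 1" using nv by (simp add: norm_eq_1)
  have "mu $ k = ?v \<bullet> ((S + t *\<^sub>R X) *v ?v)" by (simp add: eig_col[OF oV A] vv)
  also have "\<dots> = ?v \<bullet> (S *v ?v) + t * (?v \<bullet> (X *v ?v))"
    by (simp add: matrix_vector_mult_add_rdistrib inner_add_right scaleR_mv)
  finally have mk: "mu $ k = ?v \<bullet> (S *v ?v) + t * (?v \<bullet> (X *v ?v))" .
  have q: "?v \<bullet> (S *v ?v) = (\<Sum>i\<in>UNIV. lam $ i * (column i U \<bullet> ?v)^2)"
    using quad_sum[of U lam ?v ?v] S by (simp add: inner_commute power2_eq_square mult_ac)
  have p1: "(\<Sum>i\<in>UNIV. (column i U \<bullet> ?v)^2) = 1" using parseval[OF oU, of ?v ?v] vv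
    by (simp add: power2_eq_square)
  have "?v \<bullet> (S *v ?v) \<ge> lo"
  proof -
    have "(\<Sum>i\<in>UNIV. lo * (column i U \<bullet> ?v)^2) \<le> (\<Sum>i\<in>UNIV. lam $ i * (column i U \<bullet> ?v)^2)"
      using lr by (intro sum_mono mult_right_mono) auto
    then show ?thesis using q p1 by (simp add: sum_distrib_left[symmetric])
  qed
  moreover have "?v \<bullet> (S *v ?v) \<le> hi"
  proof -
    have "(\<Sum>i\<in>UNIV. lam $ i * (column i U \<bullet> ?v)^2) \<le> (\<Sum>i\<in>UNIV. hi * (column i U \<bullet> ?v)^2)"
      using lr by (intro sum_mono mult_right_mono) auto
    then show ?thesis using q p1 by (simp add: sum_distrib_left[symmetric])
  qed
  moreover have "\<bar>t * (?v \<bullet> (X *v ?v))\<bar> \<le> \<bar>t\<bar> * cX"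
  proof -
    have "\<bar>?v \<bullet> (X *v ?v)\<bar> \<le> norm ?v * norm (X *v ?v)" by (rule Cauchy_Schwarz_ineq2)
    also have "\<dots> \<le> cX" using cX[of ?v] nv by simp
    finally show ?thesis by (simp add: abs_mult mult_left_mono)
  qed
  ultimately show ?thesis using mk by auto
qed

definition ent :: "real \<Rightarrow> real^'n^'n \<Rightarrow> real^'n^'n \<Rightarrow> real^'n^'n \<Rightarrow> real \<Rightarrow> 'n \<Rightarrow> 'n \<Rightarrow> real" where
  "ent \<theta> S X U t i j = column i U \<bullet> (phi \<theta> (S + t *\<^sub>R X) *v column j U)"

definition xp :: "real^'n^'n \<Rightarrow> real^'n^'n \<Rightarrow> 'n \<Rightarrow> 'n \<Rightarrow> real" where
  "xp U X i j = column i U \<bullet> (X *v column j U)"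

lemma sym_add_scale: "sym_mat S \<Longrightarrow> sym_mat X \<Longrightarrow> sym_mat (S + t *\<^sub>R X)"
  by (simp add: sym_mat_def transpose_def vec_eq_iff)

lemma est:
  fixes U S X :: "real^'n^'n"
  assumes oU: "orthogonal_matrix U" and S: "S = U ** diag_mat lam ** transpose U"
    and lpos: "\<And>i. lam $ i > 0" and sX: "sym_mat X"
  shows "\<exists>\<delta>>0. \<exists>C. \<forall>t. \<bar>t\<bar> < \<delta> \<longrightarrow>
     \<bar>ent \<theta> S X U t i j - pf \<theta> (lam $ i) * (if i = j then 1 else 0) - pf1 \<theta> (lam $ i) * t * xp U X i j\<bar> \<le> C * \<bar>t\<bar>
     \<and> (lam $ i = lam $ j \<longrightarrow>
     \<bar>ent \<theta> S X U t i j - pf \<theta> (lam $ i) * (if i = j then 1 else 0) - pf1 \<theta> (lam $ i) * t * xp U X i j\<bar> \<le> C * \<bar>t\<bar> * \<bar>t\<bar>)"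
proof -
  define lo where "lo = Min (range (\<lambda>i. lam $ i))"
  define hi where "hi = Max (range (\<lambda>i. lam $ i))"
  have lr: "lam $ k \<in> {lo..hi}" for k unfolding lo_def hi_def by (auto intro: Min_le Max_ge)
  have lo0: "lo > 0" unfolding lo_def using lpos Min_in[of "range (\<lambda>i. lam $ i)"] by auto
  obtain cX where cX0: "cX > 0" and cX: "\<And>v. norm (X *v v) \<le> norm v * cX"
    using bounded_linear.pos_bounded[OF matrix_vector_mul_bounded_linear[of X]] by blast
  define \<delta> where "\<delta> = lo / (2 * cX)"
  define m where "m = lo / 2"
  define M where "M = hi + lo / 2"
  have m0: "m > 0" using lo0 by (simp add: m_def)
  have mM: "m < M" using lo0 lr[of undefined] by (simp add: m_def M_def)
  obtain K where hT: "\<forall>a y. a \<in> {m..M} \<longrightarrow> y \<in> {m..M} \<longrightarrow> \<bar>pf \<theta> y - pf \<theta> a - pf1 \<theta> a * (y - a)\<bar> \<le> K * (y - a)^2"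
    using pf_taylor[OF m0, of M \<theta>] by blast
  have K0: "K \<ge> 0"
  proof -
    have "0 \<le> K * (M - m)^2" using hT[rule_format, of m M] mM order_trans abs_ge_zero by fastforce
    moreover have "(M - m)^2 > 0" using mM by simp
    ultimately show ?thesis by (simp add: zero_le_mult_iff)
  qed
  define C where "C = K * (M - m) * norm (X *v column i U) + K * (norm (X *v column i U) * norm (X *v column j U))"
  have sS: "sym_mat S" unfolding S by (rule conj_sym)
  have main: "\<bar>ent \<theta> S X U t i j - pf \<theta> (lam $ i) * (if i = j then 1 else 0) - pf1 \<theta> (lam $ i) * t * xp U X i j\<bar> \<le> C * \<bar>t\<bar>
     \<and> (lam $ i = lam $ j \<longrightarrow>
     \<bar>ent \<theta> S X U t i j - pf \<theta> (lam $ i) * (if i = j then 1 else 0) - pf1 \<theta> (lam $ i) * t * xp U X i j\<bar> \<le> C * \<bar>t\<bar> * \<bar>t\<bar>)"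
    if t: "\<bar>t\<bar> < \<delta>" for t
  proof (intro conjI impI)

    have tc: "\<bar>t\<bar> * cX < lo / 2" using t cX0 by (simp add: \<delta>_def pos_less_divide_eq mult_ac)
    obtain V mu where oV: "orthogonal_matrix V" and A: "S + t *\<^sub>R X = V ** diag_mat mu ** transpose V"
      using spectral[OF sym_add_scale[OF sS sX]] by blast
    have mur: "mu $ k \<in> {m..M}" for k
      using mu_range[OF oU S oV A lr, of cX k] cX tc by (auto simp: m_def M_def mult.commute)
    have lamr: "lam $ k \<in> {m..M}" for k using lr[of k] lo0 by (auto simp: m_def M_def)
    have ex: "\<bar>ent \<theta> S X U t i j - pf \<theta> (lam $ i) * (if i = j then 1 else 0) - pf1 \<theta> (lam $ i) * t * xp U X i j\<bar>
      \<le> K * (\<Sum>k\<in>UNIV. (mu $ k - lam $ i)^2 * \<bar>column k V \<bullet> column i U\<bar> * \<bar>column k V \<bullet> column j U\<bar>)"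
      using expand[OF oU S oV A hT lamr mur] by (simp add: ent_def xp_def orth_cols[OF oU])
    have R: "\<bar>mu $ k - lam $ i\<bar> \<le> M - m" for k using mur[of k] lamr[of i] by auto
    have b1: "K * (\<Sum>k\<in>UNIV. (mu $ k - lam $ i)^2 * \<bar>column k V \<bullet> column i U\<bar> * \<bar>column k V \<bullet> column j U\<bar>)
       \<le> K * ((M - m) * \<bar>t\<bar> * norm (X *v column i U))"
      by (rule mult_left_mono[OF bound_gen[OF oU S oV A R] K0])
    have C1: "K * (M - m) * norm (X *v column i U) \<le> C" by (simp add: C_def K0)
    have C2: "K * (norm (X *v column i U) * norm (X *v column j U)) \<le> C"
      using K0 mM by (simp add: C_def)
    show "\<bar>ent \<theta> S X U t i j - pf \<theta> (lam $ i) * (if i = j then 1 else 0) - pf1 \<theta> (lam $ i) * t * xp U X i j\<bar> \<le> C * \<bar>t\<bar>"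
    proof -
      have "K * ((M - m) * \<bar>t\<bar> * norm (X *v column i U)) = (K * (M - m) * norm (X *v column i U)) * \<bar>t\<bar>"
        by (simp add: mult_ac)
      also have "\<dots> \<le> C * \<bar>t\<bar>" by (rule mult_right_mono[OF C1]) simp
      finally show ?thesis using ex b1 by linarith
    qed
    assume eq: "lam $ i = lam $ j"
    have b2: "K * (\<Sum>k\<in>UNIV. (mu $ k - lam $ i)^2 * \<bar>column k V \<bullet> column i U\<bar> * \<bar>column k V \<bullet> column j U\<bar>)
       \<le> K * (t^2 * (norm (X *v column i U) * norm (X *v column j U)))"
      by (rule mult_left_mono[OF bound_eq[OF oU S oV A eq] K0])
    have "K * (t^2 * (norm (X *v column i U) * norm (X *v column j U))) = (K * (norm (X *v column i U) * norm (X *v column j U))) * (\<bar>t\<bar> * \<bar>t\<bar>)"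
      by (simp add: power2_eq_square mult_ac)
    also have "\<dots> \<le> C * (\<bar>t\<bar> * \<bar>t\<bar>)" by (rule mult_right_mono[OF C2]) simp
    finally show "\<bar>ent \<theta> S X U t i j - pf \<theta> (lam $ i) * (if i = j then 1 else 0) - pf1 \<theta> (lam $ i) * t * xp U X i j\<bar> \<le> C * \<bar>t\<bar> * \<bar>t\<bar>"
      using ex b2 by (simp add: mult.assoc)
  qed
  have "\<delta> > 0" using lo0 cX0 by (simp add: \<delta>_def)
  then show ?thesis using main by blast
qed

lemma commut:
  fixes U S X :: "real^'n^'n"
  assumes oU: "orthogonal_matrix U" and S: "S = U ** diag_mat lam ** transpose U" and sX: "sym_mat X"
  shows "(lam $ i - lam $ j) * ent \<theta> S X U t i j
     = t * (\<Sum>l\<in>UNIV. ent \<theta> S X U t i l * xp U X l j - xp U X i l * ent \<theta> S X U t l j)"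
proof -
  have sS: "sym_mat S" unfolding S by (rule conj_sym)
  define A where "A = S + t *\<^sub>R X"
  have sA: "sym_mat A" unfolding A_def by (rule sym_add_scale[OF sS sX])
  obtain V mu where oV: "orthogonal_matrix V" and AV: "A = V ** diag_mat mu ** transpose V"
    using spectral[OF sA] by blast
  define G where "G = phi \<theta> A"
  have GV: "G = V ** diag_mat (\<chi> i. pf \<theta> (mu $ i)) ** transpose V" unfolding G_def by (rule phi_eq[OF oV AV])
  have sG: "sym_mat G" unfolding GV by (rule conj_sym)
  have GA: "G ** A = A ** G" unfolding GV AV by (rule conj_comm[OF oV])
  let ?u = "\<lambda>i. column i U"
  have e: "ent \<theta> S X U t a b = ?u a \<bullet> (G *v ?u b)" for a b by (simp add: ent_def G_def A_def)
  have Su: "S *v ?u a = lam $ a *\<^sub>R ?u a" for a by (rule eig_col[OF oU S])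
  have Au: "A *v ?u a = lam $ a *\<^sub>R ?u a + t *\<^sub>R (X *v ?u a)" for a
    by (simp add: A_def matrix_vector_mult_add_rdistrib Su scaleR_mv)
  have "lam $ i * ent \<theta> S X U t i j = (A *v ?u i) \<bullet> (G *v ?u j) - t * ((X *v ?u i) \<bullet> (G *v ?u j))"
    by (simp add: e Au inner_add_left)
  also have "(A *v ?u i) \<bullet> (G *v ?u j) = ?u i \<bullet> (G *v (A *v ?u j))"
    using sym_dot[OF sA] by (simp add: matrix_vector_mul_assoc GA)
  also have "\<dots> = lam $ j * ent \<theta> S X U t i j + t * (?u i \<bullet> (G *v (X *v ?u j)))"
    by (simp add: Au e matrix_vector_right_distrib matrix_vector_mult_scaleR inner_add_right)
  finally have c: "(lam $ i - lam $ j) * ent \<theta> S X U t i j = t * (?u i \<bullet> (G *v (X *v ?u j)) - (X *v ?u i) \<bullet> (G *v ?u j))"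
    by (simp add: algebra_simps)
  have s1: "?u i \<bullet> (G *v (X *v ?u j)) = (\<Sum>l\<in>UNIV. ent \<theta> S X U t i l * xp U X l j)"
  proof -
    have "?u i \<bullet> (G *v (X *v ?u j)) = (G *v ?u i) \<bullet> (X *v ?u j)" using sym_dot[OF sG] by simp
    also have "\<dots> = (\<Sum>l\<in>UNIV. (?u l \<bullet> (G *v ?u i)) * (?u l \<bullet> (X *v ?u j)))" using parseval[OF oU] by simp
    also have "\<dots> = (\<Sum>l\<in>UNIV. ent \<theta> S X U t i l * xp U X l j)"
    proof (rule sum.cong[OF refl])
      fix l
      have "?u l \<bullet> (G *v ?u i) = ?u i \<bullet> (G *v ?u l)" using sym_dot[OF sG, of "?u l" "?u i"] by (simp add: inner_commute)
      then show "(?u l \<bullet> (G *v ?u i)) * (?u l \<bullet> (X *v ?u j)) = ent \<theta> S X U t i l * xp U X l j"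
        by (simp add: e xp_def)
    qed
    finally show ?thesis .
  qed
  have s2: "(X *v ?u i) \<bullet> (G *v ?u j) = (\<Sum>l\<in>UNIV. xp U X i l * ent \<theta> S X U t l j)"
  proof -
    have "(X *v ?u i) \<bullet> (G *v ?u j) = (\<Sum>l\<in>UNIV. (?u l \<bullet> (X *v ?u i)) * (?u l \<bullet> (G *v ?u j)))"
      using parseval[OF oU] by simp
    also have "\<dots> = (\<Sum>l\<in>UNIV. xp U X i l * ent \<theta> S X U t l j)"
    proof (rule sum.cong[OF refl])
      fix l
      have "?u l \<bullet> (X *v ?u i) = ?u i \<bullet> (X *v ?u l)" using sym_dot[OF sX, of "?u l" "?u i"] by (simp add: inner_commute)
      then show "(?u l \<bullet> (X *v ?u i)) * (?u l \<bullet> (G *v ?u j)) = xp U X i l * ent \<theta> S X U t l j"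
        by (simp add: e xp_def)
    qed
    finally show ?thesis .
  qed
  show ?thesis using c s1 s2 by (simp add: sum_subtractf)
qed

definition bb :: "real \<Rightarrow> real \<Rightarrow> real \<Rightarrow> real" where
  "bb \<theta> x y = (if x = y then pf1 \<theta> x else (pf \<theta> x - pf \<theta> y) / (x - y))"

lemma ent0:
  fixes U S X :: "real^'n^'n"
  assumes oU: "orthogonal_matrix U" and S: "S = U ** diag_mat lam ** transpose U"
    and lpos: "\<And>i. lam $ i > 0" and sX: "sym_mat X"
  shows "ent \<theta> S X U 0 i j = pf \<theta> (lam $ i) * (if i = j then 1 else 0)"
proof -
  obtain \<delta> C where "\<delta> > 0" and b: "\<And>t. \<bar>t\<bar> < \<delta> \<Longrightarrow>
     \<bar>ent \<theta> S X U t i j - pf \<theta> (lam $ i) * (if i = j then 1 else 0) - pf1 \<theta> (lam $ i) * t * xp U X i j\<bar> \<le> C * \<bar>t\<bar>"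
    using est[OF oU S lpos sX, of \<theta> i j] by blast
  from b[of 0] \<open>\<delta> > 0\<close> show ?thesis by simp
qed

lemma ent_cont:
  fixes U S X :: "real^'n^'n"
  assumes oU: "orthogonal_matrix U" and S: "S = U ** diag_mat lam ** transpose U"
    and lpos: "\<And>i. lam $ i > 0" and sX: "sym_mat X"
  shows "((\<lambda>t. ent \<theta> S X U t i j) \<longlongrightarrow> ent \<theta> S X U 0 i j) (at 0)"
proof -
  obtain \<delta> C where d: "\<delta> > 0" and b: "\<And>t. \<bar>t\<bar> < \<delta> \<Longrightarrow>
     \<bar>ent \<theta> S X U t i j - pf \<theta> (lam $ i) * (if i = j then 1 else 0) - pf1 \<theta> (lam $ i) * t * xp U X i j\<bar> \<le> C * \<bar>t\<bar>"
    using est[OF oU S lpos sX, of \<theta> i j] by blast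
  have e0: "ent \<theta> S X U 0 i j = pf \<theta> (lam $ i) * (if i = j then 1 else 0)" by (rule ent0[OF oU S lpos sX])
  show ?thesis
  proof (rule cont_from_bound[OF d])
    fix t :: real assume t: "\<bar>t\<bar> < \<delta>"
    have "\<bar>pf1 \<theta> (lam $ i) * t * xp U X i j\<bar> = \<bar>pf1 \<theta> (lam $ i) * xp U X i j\<bar> * \<bar>t\<bar>"
      by (simp add: abs_mult mult_ac)
    then show "\<bar>ent \<theta> S X U t i j - ent \<theta> S X U 0 i j\<bar> \<le> (C + \<bar>pf1 \<theta> (lam $ i) * xp U X i j\<bar>) * \<bar>t\<bar>"
      using b[OF t] unfolding e0 by (simp add: distrib_right)
  qed
qed

lemma ent_deriv:
  fixes U S X :: "real^'n^'n"
  assumes oU: "orthogonal_matrix U" and S: "S = U ** diag_mat lam ** transpose U"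
    and lpos: "\<And>i. lam $ i > 0" and sX: "sym_mat X"
  shows "((\<lambda>t. ent \<theta> S X U t i j) has_real_derivative bb \<theta> (lam $ i) (lam $ j) * xp U X i j) (at 0)"
proof (cases "lam $ i = lam $ j")
  case True
  obtain \<delta> C where d: "\<delta> > 0" and b: "\<And>t. \<bar>t\<bar> < \<delta> \<Longrightarrow>
     \<bar>ent \<theta> S X U t i j - pf \<theta> (lam $ i) * (if i = j then 1 else 0) - pf1 \<theta> (lam $ i) * t * xp U X i j\<bar> \<le> C * \<bar>t\<bar> * \<bar>t\<bar>"
    using est[OF oU S lpos sX, of \<theta> i j] True by blast
  have e0: "ent \<theta> S X U 0 i j = pf \<theta> (lam $ i) * (if i = j then 1 else 0)" by (rule ent0[OF oU S lpos sX])
  show ?thesis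
  proof (rule deriv_from_bound[OF d])
    fix t :: real assume t: "\<bar>t\<bar> < \<delta>"
    show "\<bar>ent \<theta> S X U t i j - ent \<theta> S X U 0 i j - bb \<theta> (lam $ i) (lam $ j) * xp U X i j * t\<bar> \<le> C * \<bar>t\<bar> * \<bar>t\<bar>"
      using b[OF t] True unfolding e0 by (simp add: bb_def mult_ac)
  qed
next
  case False
  then have ij: "i \<noteq> j" by auto
  have e0: "ent \<theta> S X U 0 a b = pf \<theta> (lam $ a) * (if a = b then 1 else 0)" for a b by (rule ent0[OF oU S lpos sX])
  have c: "((\<lambda>t. ent \<theta> S X U t a b) \<longlongrightarrow> ent \<theta> S X U 0 a b) (at 0)" for a b by (rule ent_cont[OF oU S lpos sX])
  define Q where "Q t = (\<Sum>l\<in>UNIV. ent \<theta> S X U t i l * xp U X l j - xp U X i l * ent \<theta> S X U t l j) / (lam $ i - lam $ j)" for t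
  have lim: "(Q \<longlongrightarrow> Q 0) (at 0)" unfolding Q_def by (intro tendsto_intros c) (use False in simp)
  have Q0: "Q 0 = bb \<theta> (lam $ i) (lam $ j) * xp U X i j"
  proof -
    have "(\<Sum>l\<in>UNIV. ent \<theta> S X U 0 i l * xp U X l j - xp U X i l * ent \<theta> S X U 0 l j)
        = (\<Sum>l\<in>UNIV. (if l = i then pf \<theta> (lam $ i) * xp U X i j else 0) - (if l = j then xp U X i j * pf \<theta> (lam $ j) else 0))"
      by (rule sum.cong[OF refl]) (auto simp: e0)
    also have "\<dots> = (pf \<theta> (lam $ i) - pf \<theta> (lam $ j)) * xp U X i j"
      by (simp add: sum_subtractf algebra_simps)
    finally show ?thesis using False by (simp add: Q_def bb_def)
  qed
  have ev: "\<forall>\<^sub>F t in at 0. Q t = (ent \<theta> S X U t i j - ent \<theta> S X U 0 i j) / (t - 0)"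
    unfolding eventually_at
  proof (intro exI[of _ 1] conjI ballI impI)
    fix t :: real assume "t \<noteq> 0 \<and> dist t 0 < 1"
    then have t: "t \<noteq> 0" by simp
    have "(lam $ i - lam $ j) * ent \<theta> S X U t i j
     = t * (\<Sum>l\<in>UNIV. ent \<theta> S X U t i l * xp U X l j - xp U X i l * ent \<theta> S X U t l j)"
      by (rule commut[OF oU S sX])
    then show "Q t = (ent \<theta> S X U t i j - ent \<theta> S X U 0 i j) / (t - 0)"
      using t False ij by (simp add: Q_def e0 field_simps)
  qed simp
  have "((\<lambda>t. (ent \<theta> S X U t i j - ent \<theta> S X U 0 i j) / (t - 0)) \<longlongrightarrow> Q 0) (at 0)"
    using lim unfolding tendsto_cong[OF ev] .
  then show ?thesis unfolding has_field_derivative_iff Q0 .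
qed

lemma conj_gen:
  "(U ** M ** transpose U) $ r $ s = (\<Sum>i\<in>UNIV. \<Sum>j\<in>UNIV. U $ r $ i * M $ i $ j * U $ s $ j)"
  by (simp add: matrix_matrix_mult_def transpose_def sum_distrib_left sum_distrib_right mult_ac)
     (rule sum.swap)

lemma dphi_eq:
  fixes U S X :: "real^'n^'n"
  assumes oU: "orthogonal_matrix U" and S: "S = U ** diag_mat lam ** transpose U"
    and lpos: "\<And>i. lam $ i > 0" and sX: "sym_mat X"
  shows "dphi \<theta> S X = U ** (\<chi> i j. bb \<theta> (lam $ i) (lam $ j) * xp U X i j) ** transpose U"
proof -
  define D where "D = (\<chi> i j. bb \<theta> (lam $ i) (lam $ j) * xp U X i j)"
  have f: "phi \<theta> (S + t *\<^sub>R X) = U ** (\<chi> i j. ent \<theta> S X U t i j) ** transpose U" for t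
  proof -
    have "(\<chi> i j. ent \<theta> S X U t i j) = transpose U ** phi \<theta> (S + t *\<^sub>R X) ** U"
      by (simp add: vec_eq_iff entry_eq ent_def)
    then show ?thesis using mat_recon[OF oU] by simp
  qed
  have "((\<lambda>t. phi \<theta> (S + t *\<^sub>R X)) has_vector_derivative U ** D ** transpose U) (at 0)"
  proof (rule vec_deriv)
    fix r s
    have "((\<lambda>t. \<Sum>i\<in>UNIV. \<Sum>j\<in>UNIV. U $ r $ i * ent \<theta> S X U t i j * U $ s $ j) has_real_derivative
        (\<Sum>i\<in>UNIV. \<Sum>j\<in>UNIV. U $ r $ i * D $ i $ j * U $ s $ j)) (at 0)"
    proof (intro DERIV_sum)
      fix i j
      show "((\<lambda>t. U $ r $ i * ent \<theta> S X U t i j * U $ s $ j) has_real_derivative U $ r $ i * D $ i $ j * U $ s $ j) (at 0)"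
        using DERIV_cmult[OF ent_deriv[OF oU S lpos sX, of \<theta> i j], of "U $ r $ i"]
        by (intro DERIV_cmult_right) (simp add: D_def)
    qed
    then show "((\<lambda>t. phi \<theta> (S + t *\<^sub>R X) $ r $ s) has_real_derivative (U ** D ** transpose U) $ r $ s) (at 0)"
      unfolding f conj_gen by simp
  qed
  then show ?thesis unfolding dphi_def D_def by (rule vector_derivative_at)
qed

lemma trace_conj:
  fixes U :: "real^'n^'n"
  assumes oU: "orthogonal_matrix U"
  shows "trace (U ** M ** transpose U) = trace M"
proof -
  have "trace (U ** M ** transpose U) = trace (U ** (M ** transpose U))" by (simp add: matrix_mul_assoc)
  also have "\<dots> = trace ((M ** transpose U) ** U)" by (rule trace_mul_sym)
  also have "\<dots> = trace M" by (simp add: matrix_mul_assoc[symmetric] orth_TU[OF oU])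
  finally show ?thesis .
qed

lemma trace_diag4:
  "trace (diag_mat p ** A ** diag_mat p ** B) = (\<Sum>i\<in>UNIV. \<Sum>j\<in>UNIV. p $ i * A $ i $ j * p $ j * B $ j $ i)"
  by (simp add: trace_def matrix_matrix_mult_def[of "diag_mat p ** A ** diag_mat p" B]
      diag_mat_mult_right diag_mat_mult_left mult_ac)

lemma mpa_formula:
  fixes U S X Y :: "real^'n^'n"
  assumes oU: "orthogonal_matrix U" and S: "S = U ** diag_mat lam ** transpose U"
    and lpos: "\<And>i. lam $ i > 0" and sX: "sym_mat X" and sY: "sym_mat Y"
  shows "mpa_form \<theta>1 \<theta>2 S X Y = (\<Sum>i\<in>UNIV. \<Sum>j\<in>UNIV.
     exp (- ((\<theta>1 + \<theta>2) / 2) * ln (lam $ i)) * bb \<theta>1 (lam $ i) (lam $ j) * xp U X i j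
     * exp (- ((\<theta>1 + \<theta>2) / 2) * ln (lam $ j)) * bb \<theta>2 (lam $ j) (lam $ i) * xp U Y j i)"
proof -
  define p where "p = (\<chi> i. exp (- ((\<theta>1 + \<theta>2) / 2) * ln (lam $ i)))"
  define D1 where "D1 = (\<chi> i j. bb \<theta>1 (lam $ i) (lam $ j) * xp U X i j)"
  define D2 where "D2 = (\<chi> i j. bb \<theta>2 (lam $ i) (lam $ j) * xp U Y i j)"
  have P: "mat_pow (- ((\<theta>1 + \<theta>2) / 2)) S = U ** diag_mat p ** transpose U"
    unfolding p_def by (rule mat_pow_eq[OF oU S])
  have "mat_pow (- ((\<theta>1 + \<theta>2) / 2)) S ** dphi \<theta>1 S X ** mat_pow (- ((\<theta>1 + \<theta>2) / 2)) S ** dphi \<theta>2 S Y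
     = U ** (diag_mat p ** D1 ** diag_mat p ** D2) ** transpose U"
    unfolding P dphi_eq[OF oU S lpos sX] dphi_eq[OF oU S lpos sY] D1_def[symmetric] D2_def[symmetric]
    by (simp add: matrix_mul_assoc) (simp add: matrix_mul_assoc[symmetric] orth_TU[OF oU])
  then have "mpa_form \<theta>1 \<theta>2 S X Y = trace (diag_mat p ** D1 ** diag_mat p ** D2)"
    by (simp add: mpa_form_def Let_def trace_conj[OF oU])
  also have "\<dots> = (\<Sum>i\<in>UNIV. \<Sum>j\<in>UNIV. p $ i * D1 $ i $ j * p $ j * D2 $ j $ i)" by (rule trace_diag4)
  finally show ?thesis by (simp add: p_def D1_def D2_def mult_ac)
qed

lemma bb_sym: "bb \<theta> x y = bb \<theta> y x"
  by (simp add: bb_def) (simp add: divide_simps algebra_simps)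

lemma bb_pos: "x > 0 \<Longrightarrow> y > 0 \<Longrightarrow> bb \<theta> x y > 0"
  by (auto simp: bb_def pf1_def pf_mono_dd)

lemma xp_sym: "sym_mat X \<Longrightarrow> xp U X i j = xp U X j i"
  unfolding xp_def using sym_dot[of X "column j U" "column i U"] by (simp add: inner_commute)

lemma xp_lin: "xp U (X + a *\<^sub>R Z) i j = xp U X i j + a * xp U Z i j"
  by (simp add: xp_def matrix_vector_mult_add_rdistrib scaleR_mv inner_add_right)

lemma xp_nonzero:
  fixes U X :: "real^'n^'n"
  assumes oU: "orthogonal_matrix U" and "X \<noteq> 0"
  shows "\<exists>i j. xp U X i j \<noteq> 0"
proof (rule ccontr)
  assume "\<not> (\<exists>i j. xp U X i j \<noteq> 0)"
  then have "transpose U ** X ** U = 0" by (simp add: vec_eq_iff entry_eq xp_def)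
  then have "X = 0" using mat_recon[OF oU, of X] by simp
  then show False using assms by simp
qed



theorem theorem5:
  fixes \<theta>1 \<theta>2 :: real and S :: "real^'n^'n"
  assumes "spd S"
  shows "(\<forall>X Y Z (a::real). sym_mat X \<and> sym_mat Y \<and> sym_mat Z \<longrightarrow>
            mpa_form \<theta>1 \<theta>2 S (X + a *\<^sub>R Z) Y
              = mpa_form \<theta>1 \<theta>2 S X Y + a * mpa_form \<theta>1 \<theta>2 S Z Y)
       \<and> (\<forall>X Y. sym_mat X \<and> sym_mat Y \<longrightarrow> mpa_form \<theta>1 \<theta>2 S X Y = mpa_form \<theta>1 \<theta>2 S Y X)
       \<and> (\<forall>X. sym_mat X \<and> X \<noteq> 0 \<longrightarrow> mpa_form \<theta>1 \<theta>2 S X X > 0)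
       \<and> (\<forall>X Y. sym_mat X \<and> sym_mat Y \<longrightarrow> mpa_form \<theta>1 \<theta>2 S X Y = mpa_form \<theta>2 \<theta>1 S X Y)"
proof -
  obtain U lam where oU: "orthogonal_matrix U" and S: "S = U ** diag_mat lam ** transpose U"
    and lpos: "\<And>i. lam $ i > 0"
    using spd_decomp[OF assms] by blast
  define c where "c a b i j = exp (- ((a + b) / 2) * ln (lam $ i)) * exp (- ((a + b) / 2) * ln (lam $ j))
      * bb a (lam $ i) (lam $ j) * bb b (lam $ i) (lam $ j)" for a b i j
  have F: "mpa_form a b S X Y = (\<Sum>i\<in>UNIV. \<Sum>j\<in>UNIV. c a b i j * xp U X i j * xp U Y i j)"
    if sX: "sym_mat X" and sY: "sym_mat Y" for a b X Y
    unfolding mpa_formula[OF oU S lpos sX sY]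
  proof (intro sum.cong refl)
    fix i j
    have e1: "bb b (lam $ j) (lam $ i) = bb b (lam $ i) (lam $ j)" by (rule bb_sym)
    have e2: "xp U Y j i = xp U Y i j" by (rule xp_sym[OF sY])
    show "exp (- ((a + b) / 2) * ln (lam $ i)) * bb a (lam $ i) (lam $ j) * xp U X i j *
          exp (- ((a + b) / 2) * ln (lam $ j)) * bb b (lam $ j) (lam $ i) * xp U Y j i =
          c a b i j * xp U X i j * xp U Y i j"
      unfolding e1 e2 c_def by (simp only: mult_ac)
  qed
  have cpos: "c a b i j > 0" for a b i j
    unfolding c_def using bb_pos lpos by simp
  have cswap: "c a b i j = c b a i j" for a b i j unfolding c_def by (simp add: add.commute mult_ac)
  have P1: "mpa_form \<theta>1 \<theta>2 S (X + a *\<^sub>R Z) Y = mpa_form \<theta>1 \<theta>2 S X Y + a * mpa_form \<theta>1 \<theta>2 S Z Y"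
    if "sym_mat X" "sym_mat Y" "sym_mat Z" for X Y Z a
  proof -
    have sXZ: "sym_mat (X + a *\<^sub>R Z)" using that by (simp add: sym_add_scale)
    show ?thesis unfolding F[OF sXZ that(2)] F[OF that(1,2)] F[OF that(3,2)] xp_lin
      by (simp add: algebra_simps sum.distrib sum_distrib_left)
  qed
  have P2: "mpa_form \<theta>1 \<theta>2 S X Y = mpa_form \<theta>1 \<theta>2 S Y X" if "sym_mat X" "sym_mat Y" for X Y
    unfolding F[OF that] F[OF that(2,1)] by (simp add: mult_ac)
  have P3: "mpa_form \<theta>1 \<theta>2 S X X > 0" if sX: "sym_mat X" and nz: "X \<noteq> 0" for X
  proof -
    obtain i0 j0 where x0: "xp U X i0 j0 \<noteq> 0" using xp_nonzero[OF oU nz] by blast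
    have nn: "0 \<le> c \<theta>1 \<theta>2 i j * xp U X i j * xp U X i j" for i j
      using cpos[of \<theta>1 \<theta>2 i j] by (simp add: mult.assoc)
    have pos: "0 < c \<theta>1 \<theta>2 i0 j0 * xp U X i0 j0 * xp U X i0 j0"
      using cpos[of \<theta>1 \<theta>2 i0 j0] x0 by (simp add: mult.assoc mult_pos_pos not_square_less_zero less_le)
    have A1: "0 < (\<Sum>j\<in>UNIV. c \<theta>1 \<theta>2 i0 j * xp U X i0 j * xp U X i0 j)"
      by (rule sum_pos2[of UNIV j0]) (use nn pos in auto)
    have A2: "0 \<le> (\<Sum>j\<in>UNIV. c \<theta>1 \<theta>2 i j * xp U X i j * xp U X i j)" for i
      by (rule sum_nonneg) (use nn in auto)
    have "0 < (\<Sum>i\<in>UNIV. \<Sum>j\<in>UNIV. c \<theta>1 \<theta>2 i j * xp U X i j * xp U X i j)"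
      by (rule sum_pos2[of UNIV i0]) (use A1 A2 in auto)
    then show ?thesis unfolding F[OF sX sX] .
  qed
  have P4: "mpa_form \<theta>1 \<theta>2 S X Y = mpa_form \<theta>2 \<theta>1 S X Y" if "sym_mat X" "sym_mat Y" for X Y
    unfolding F[OF that] using cswap by simp
  show ?thesis using P1 P2 P3 P4 by blast
qed

end
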